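(* Let $n=p_1^{\alpha_1}p_2^{\alpha_2}p_3^{\alpha_3}$, where $\alpha_1,\alpha_2,\alpha_3$ are positive integers and $p_1<p_2<p_3$ are primes. If $p_3\geq 2p_2+1$, then $\delta(\mathcal{P}(C_n))=\deg(p_3^{\alpha_3})$.
   Context: For a finite group $G$, the power graph $\mathcal{P}(G)$ is the simple undirected graph with vertex set $G$ in which two distinct vertices are adjacent if one is an integral power of the other. $C_n$ denotes the cyclic group of order $n$, identified with $\mathbb{Z}_n=\{0,1,\ldots,n-1\}$, so a positive divisor $d<n$ of $n$ is regarded as the element $d\in\mathbb{Z}_n$. $\deg(a)$ is the degree of vertex $a$ in $\mathcal{P}(C_n)$ and $\delta$ denotes minimum degree. *)

theory Defs
  imports "HOL-Computational_Algebra.Primes"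
begin

text \<open>The cyclic group C_n is identified with Z_n = {0,..,n-1} under addition mod n.
  An integral power of a is a multiple k*a (mod n) for an integer k; since k ranges over
  all integers and the group is finite, natural k suffice.\<close>

definition is_power_cyc :: "nat \<Rightarrow> nat \<Rightarrow> nat \<Rightarrow> bool" where
  "is_power_cyc n b a \<longleftrightarrow> (\<exists>k::int. int b = (k * int a) mod int n)"

definition pg_adj :: "nat \<Rightarrow> nat \<Rightarrow> nat \<Rightarrow> bool" where
  "pg_adj n a b \<longleftrightarrow> a \<in> {0..<n} \<and> b \<in> {0..<n} \<and> a \<noteq> b \<and>
     (is_power_cyc n b a \<or> is_power_cyc n a b)"

definition pg_deg :: "nat \<Rightarrow> nat \<Rightarrow> nat" where
  "pg_deg n a = card {b \<in> {0..<n}. pg_adj n a b}"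

definition pg_min_deg :: "nat \<Rightarrow> nat" where
  "pg_min_deg n = Min (pg_deg n ` {0..<n})"

end

theory Submission
  imports Defs Complex_Main
begin


lemma power_cyc_iff:
  assumes n: "0 < n" and bn: "b < n"
  shows "is_power_cyc n b a \<longleftrightarrow> gcd a n dvd b"
proof
  assume "is_power_cyc n b a"
  then obtain k :: int where k: "int b = (k * int a) mod int n"
    unfolding is_power_cyc_def by blast
  have "gcd (int a) (int n) dvd (k * int a) mod int n"
    by (simp add: dvd_mod)
  then have "int (gcd a n) dvd int b" using k by simp
  then show "gcd a n dvd b" by simp
next
  assume "gcd a n dvd b"
  then obtain m where m: "b = gcd a n * m" by blast
  obtain u v :: int where uv: "u * int a + v * int n = gcd (int a) (int n)"
    using bezout_int by blast
  have "(int m * u * int a) mod int n = (int m * (u * int a + v * int n)) mod int n"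
    by (metis (no_types, lifting) mod_mult_self1 distrib_left mult.assoc mult.commute)
  also have "\<dots> = int b mod int n" using uv m by (simp add: mult.commute)
  also have "\<dots> = int b" using bn by simp
  finally show "is_power_cyc n b a" unfolding is_power_cyc_def by metis
qed



definition NN :: "nat \<Rightarrow> nat \<Rightarrow> nat" where
  "NN n d = card {b\<in>{0..<n}. \<not> d dvd gcd b n \<and> \<not> gcd b n dvd d}"

lemma adj_iff:
  assumes n: "0 < n" and an: "a < n"
  shows "pg_adj n a b \<longleftrightarrow> b \<in> {0..<n} \<and> b \<noteq> a \<and> (gcd a n dvd gcd b n \<or> gcd b n dvd gcd a n)"
proof (cases "b < n")
  case True
  have 1: "gcd a n dvd b \<longleftrightarrow> gcd a n dvd gcd b n" by simp
  have 2: "gcd b n dvd a \<longleftrightarrow> gcd b n dvd gcd a n" by simp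
  show ?thesis using True an n
    unfolding pg_adj_def power_cyc_iff[OF n True] power_cyc_iff[OF n an] 1 2 by auto
qed (auto simp: pg_adj_def)

lemma deg_NN:
  assumes n: "0 < n" and an: "a < n"
  shows "pg_deg n a + 1 + NN n (gcd a n) = n"
proof -
  define D where "D = {b\<in>{0..<n}. gcd a n dvd gcd b n \<or> gcd b n dvd gcd a n}"
  define E where "E = {b\<in>{0..<n}. \<not> gcd a n dvd gcd b n \<and> \<not> gcd b n dvd gcd a n}"
  have adj: "{b \<in> {0..<n}. pg_adj n a b} = D - {a}"
    using adj_iff[OF n an] unfolding D_def by auto
  have aD: "a \<in> D" using an unfolding D_def by auto
  have fD: "finite D" unfolding D_def by auto
  have "card (D - {a}) + 1 = card D" using aD fD
    by (metis One_nat_def Suc_pred card_Diff_singleton card_gt_0_iff empty_iff Suc_eq_plus1)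
  moreover have "card D + card E = n"
  proof -
    have "D \<union> E = {0..<n}" "D \<inter> E = {}" unfolding D_def E_def by auto
    then show ?thesis by (metis card_Un_disjoint card_atLeastLessThan diff_zero finite_Un finite_atLeastLessThan)
  qed
  ultimately show ?thesis unfolding pg_deg_def NN_def adj E_def[symmetric] by linarith
qed



locale tri =
  fixes p q r a b c n :: nat
  assumes pp: "prime p" and pq: "prime q" and pr: "prime r"
    and dpq: "p \<noteq> q" and dpr: "p \<noteq> r" and dqr: "q \<noteq> r"
    and lpq: "p < q" and lqr: "q < r" and big: "2*q + 1 \<le> r"
    and a0: "a > 0" and b0: "b > 0" and c0: "c > 0"
    and ndef: "n = p ^ a * q ^ b * r ^ c"
begin

definition pw :: "nat \<Rightarrow> nat \<Rightarrow> nat \<Rightarrow> nat" where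
  "pw i j k = p ^ i * q ^ j * r ^ k"

lemma pw_nz: "pw i j k \<noteq> 0"
  using pp pq pr unfolding pw_def by (auto simp: prime_gt_0_nat)

lemma n_pw: "n = pw a b c" unfolding ndef pw_def ..

lemma n_pos: "0 < n" using pw_nz n_pw by simp

lemma mult_pw:
  "multiplicity p (pw i j k) = i" "multiplicity q (pw i j k) = j" "multiplicity r (pw i j k) = k"
proof -
  have nz: "p ^ i \<noteq> 0" "q ^ j \<noteq> 0" "r ^ k \<noteq> 0" "p ^ i * q ^ j \<noteq> 0"
    using pp pq pr by (auto simp: prime_gt_0_nat)
  have pe: "prime_elem p" "prime_elem q" "prime_elem r" using pp pq pr by auto
  show "multiplicity p (pw i j k) = i" unfolding pw_def
    using pp pq pr dpq dpr dqr nz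
    by (simp add: prime_elem_multiplicity_mult_distrib[OF pe(1)] multiplicity_distinct_prime_power)
  show "multiplicity q (pw i j k) = j" unfolding pw_def
    using pp pq pr dpq dpr dqr nz
    by (simp add: prime_elem_multiplicity_mult_distrib[OF pe(2)] multiplicity_distinct_prime_power)
  show "multiplicity r (pw i j k) = k" unfolding pw_def
    using pp pq pr dpq dpr dqr nz
    by (simp add: prime_elem_multiplicity_mult_distrib[OF pe(3)] multiplicity_distinct_prime_power)
qed

lemma pw_dvd_iff: "pw i j k dvd pw i' j' k' \<longleftrightarrow> i \<le> i' \<and> j \<le> j' \<and> k \<le> k'"
proof
  assume h: "pw i j k dvd pw i' j' k'"
  show "i \<le> i' \<and> j \<le> j' \<and> k \<le> k'"
    using dvd_imp_multiplicity_le[OF h pw_nz, of p] dvd_imp_multiplicity_le[OF h pw_nz, of q]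
      dvd_imp_multiplicity_le[OF h pw_nz, of r] by (simp add: mult_pw)
next
  assume "i \<le> i' \<and> j \<le> j' \<and> k \<le> k'"
  then show "pw i j k dvd pw i' j' k'" unfolding pw_def
    by (intro mult_dvd_mono le_imp_power_dvd) auto
qed

lemma dvd_n_decomp:
  assumes "g dvd n"
  shows "\<exists>i j k. i \<le> a \<and> j \<le> b \<and> k \<le> c \<and> g = pw i j k"
proof -
  from assms obtain g1 g2 where g: "g = g1 * g2" "g1 dvd p ^ a * q ^ b" "g2 dvd r ^ c"
    unfolding ndef using division_decomp by blast
  from g(2) obtain g11 g12 where g1: "g1 = g11 * g12" "g11 dvd p ^ a" "g12 dvd q ^ b"
    using division_decomp by blast
  obtain i where i: "i \<le> a" "g11 = p ^ i" using g1(2) divides_primepow_nat[OF pp] by blast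
  obtain j where j: "j \<le> b" "g12 = q ^ j" using g1(3) divides_primepow_nat[OF pq] by blast
  obtain k where k: "k \<le> c" "g2 = r ^ k" using g(3) divides_primepow_nat[OF pr] by blast
  show ?thesis using i j k g g1 unfolding pw_def by blast
qed

definition X :: "nat \<Rightarrow> nat" where "X x = multiplicity p (gcd x n)"
definition Y :: "nat \<Rightarrow> nat" where "Y x = multiplicity q (gcd x n)"
definition Z :: "nat \<Rightarrow> nat" where "Z x = multiplicity r (gcd x n)"

lemma gcd_pw: "gcd x n = pw (X x) (Y x) (Z x)" "X x \<le> a" "Y x \<le> b" "Z x \<le> c"
proof -
  obtain i j k where ijk: "i \<le> a" "j \<le> b" "k \<le> c" "gcd x n = pw i j k"
    using dvd_n_decomp[of "gcd x n"] by auto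
  then show "gcd x n = pw (X x) (Y x) (Z x)" "X x \<le> a" "Y x \<le> b" "Z x \<le> c"
    unfolding X_def Y_def Z_def by (auto simp: mult_pw)
qed

lemma card_mult:
  assumes "m dvd N" "0 < m"
  shows "card {x\<in>{0..<N}. m dvd x} = N div m"
proof -
  have "{x\<in>{0..<N}. m dvd x} = (\<lambda>i. m * i) ` {0..<N div m}"
  proof (rule set_eqI)
    fix x
    show "x \<in> {x\<in>{0..<N}. m dvd x} \<longleftrightarrow> x \<in> (\<lambda>i. m * i) ` {0..<N div m}"
    proof
      assume "x \<in> {x\<in>{0..<N}. m dvd x}"
      then have xN: "x < N" and "m dvd x" by auto
      then obtain i where "x = m * i" by blast
      then have "i < N div m" using assms xN
        by (metis dvd_mult_div_cancel mult_less_cancel1)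
      then show "x \<in> (\<lambda>i. m * i) ` {0..<N div m}" using \<open>x = m * i\<close>
        by (intro image_eqI[where x=i]) auto
    next
      assume "x \<in> (\<lambda>i. m * i) ` {0..<N div m}"
      then obtain i where "x = m * i" "i < N div m" by (metis atLeastLessThan_iff imageE)
      then have "x < N" using assms
        by (metis dvd_mult_div_cancel mult_less_cancel1)
      then show "x \<in> {x\<in>{0..<N}. m dvd x}" using \<open>x = m * i\<close> by auto
    qed
  qed
  moreover have "inj_on (\<lambda>i. m * i) {0..<N div m}" using assms by (auto simp: inj_on_def)
  ultimately show ?thesis by (simp add: card_image)
qed

lemma card_up:
  "card {x\<in>{0..<n}. u \<le> X x \<and> v \<le> Y x \<and> w \<le> Z x} =
     (if u \<le> a \<and> v \<le> b \<and> w \<le> c then n div pw u v w else 0)"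
proof -
  have eq: "(u \<le> X x \<and> v \<le> Y x \<and> w \<le> Z x) \<longleftrightarrow> pw u v w dvd x \<and> pw u v w dvd n" for x
    using pw_dvd_iff[of u v w "X x" "Y x" "Z x"] gcd_pw(1)[of x] by (metis gcd_greatest_iff)
  show ?thesis
  proof (cases "u \<le> a \<and> v \<le> b \<and> w \<le> c")
    case True
    then have d: "pw u v w dvd n" using pw_dvd_iff n_pw by simp
    then show ?thesis unfolding eq using True card_mult[OF d] pw_nz by simp
  next
    case False
    then have "\<not> pw u v w dvd n" using pw_dvd_iff n_pw by simp
    then show ?thesis unfolding eq using False by auto
  qed
qed

end


lemma ie3:
  assumes "finite S"
  shows "card {s\<in>S. B s \<and> (P1 s \<or> P2 s \<or> P3 s)} + card {s\<in>S. B s \<and> P1 s \<and> P2 s}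
       + card {s\<in>S. B s \<and> P1 s \<and> P3 s} + card {s\<in>S. B s \<and> P2 s \<and> P3 s}
     = card {s\<in>S. B s \<and> P1 s} + card {s\<in>S. B s \<and> P2 s} + card {s\<in>S. B s \<and> P3 s}
       + card {s\<in>S. B s \<and> P1 s \<and> P2 s \<and> P3 s}"
proof -
  define A1 where "A1 = {s\<in>S. B s \<and> P1 s}"
  define A2 where "A2 = {s\<in>S. B s \<and> P2 s}"
  define A3 where "A3 = {s\<in>S. B s \<and> P3 s}"
  have f: "finite A1" "finite A2" "finite A3" using assms unfolding A1_def A2_def A3_def by auto
  have e1: "card (A1 \<union> A2) + card (A1 \<inter> A2) = card A1 + card A2"
    using card_Un_Int[OF f(1) f(2)] by linarith
  have e2: "card ((A1 \<union> A2) \<union> A3) + card ((A1 \<union> A2) \<inter> A3) = card (A1 \<union> A2) + card A3"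
    using card_Un_Int[OF finite_UnI[OF f(1) f(2)] f(3)] by linarith
  have e3: "card ((A1 \<inter> A3) \<union> (A2 \<inter> A3)) + card ((A1 \<inter> A3) \<inter> (A2 \<inter> A3)) = card (A1 \<inter> A3) + card (A2 \<inter> A3)"
    using card_Un_Int[of "A1 \<inter> A3" "A2 \<inter> A3"] f by auto
  have s1: "(A1 \<union> A2) \<union> A3 = {s\<in>S. B s \<and> (P1 s \<or> P2 s \<or> P3 s)}" unfolding A1_def A2_def A3_def by auto
  have s2: "(A1 \<union> A2) \<inter> A3 = (A1 \<inter> A3) \<union> (A2 \<inter> A3)" by auto
  have s3: "(A1 \<inter> A3) \<inter> (A2 \<inter> A3) = {s\<in>S. B s \<and> P1 s \<and> P2 s \<and> P3 s}" unfolding A1_def A2_def A3_def by auto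
  have s4: "A1 \<inter> A2 = {s\<in>S. B s \<and> P1 s \<and> P2 s}" "A1 \<inter> A3 = {s\<in>S. B s \<and> P1 s \<and> P3 s}"
    "A2 \<inter> A3 = {s\<in>S. B s \<and> P2 s \<and> P3 s}" unfolding A1_def A2_def A3_def by auto
  have e3': "card ((A1 \<inter> A3) \<union> (A2 \<inter> A3)) + card {s\<in>S. B s \<and> P1 s \<and> P2 s \<and> P3 s} = card (A1 \<inter> A3) + card (A2 \<inter> A3)"
    using e3 s3 by simp
  have e2': "card {s\<in>S. B s \<and> (P1 s \<or> P2 s \<or> P3 s)} + card ((A1 \<inter> A3) \<union> (A2 \<inter> A3)) = card (A1 \<union> A2) + card A3"
    using e2 s1 s2 by simp
  show ?thesis using e1 e2' e3' unfolding s4[symmetric] A1_def[symmetric] A2_def[symmetric] A3_def[symmetric]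
    by linarith
qed

context tri begin

definition C :: "nat \<Rightarrow> nat \<Rightarrow> nat \<Rightarrow> nat" where
  "C u v w = card {x\<in>{0..<n}. u \<le> X x \<and> v \<le> Y x \<and> w \<le> Z x}"

definition F :: "nat \<Rightarrow> real" where "F u = (if u \<le> a then 1 / real p ^ u else 0)"
definition G :: "nat \<Rightarrow> real" where "G u = (if u \<le> b then 1 / real q ^ u else 0)"
definition H :: "nat \<Rightarrow> real" where "H u = (if u \<le> c then 1 / real r ^ u else 0)"

lemma C_real: "real (C u v w) = real n * F u * G v * H w"
proof (cases "u \<le> a \<and> v \<le> b \<and> w \<le> c")
  case True
  then have d: "pw u v w dvd n" using pw_dvd_iff n_pw by simp
  have C1: "C u v w = n div pw u v w" using True unfolding C_def card_up by simp
  have "real (n div pw u v w) = real n / real (pw u v w)" using d by (rule real_of_nat_div)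
  also have "\<dots> = real n / (real p ^ u * real q ^ v * real r ^ w)" unfolding pw_def by simp
  also have "\<dots> = real n * (1 / real p ^ u) * (1 / real q ^ v) * (1 / real r ^ w)" by simp
  finally show ?thesis using True unfolding C1 F_def G_def H_def by simp
next
  case False
  then have "C u v w = 0" unfolding C_def card_up by auto
  moreover have "F u * G v * H w = 0" using False unfolding F_def G_def H_def by auto
  ultimately show ?thesis by simp
qed

lemma ie_up:
  assumes "x0 \<le> x1" "y0 \<le> y1" "z0 \<le> z1"
  shows "real (card {s\<in>{0..<n}. (x0 \<le> X s \<and> y0 \<le> Y s \<and> z0 \<le> Z s) \<and> (x1 \<le> X s \<or> y1 \<le> Y s \<or> z1 \<le> Z s)})
    = real (C x1 y0 z0) + real (C x0 y1 z0) + real (C x0 y0 z1) - real (C x1 y1 z0) - real (C x1 y0 z1)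
      - real (C x0 y1 z1) + real (C x1 y1 z1)"
proof -
  have k: "card {s\<in>{0..<n}. (x0 \<le> X s \<and> y0 \<le> Y s \<and> z0 \<le> Z s) \<and> (x1 \<le> X s \<or> y1 \<le> Y s \<or> z1 \<le> Z s)}
     + C x1 y1 z0 + C x1 y0 z1 + C x0 y1 z1 = C x1 y0 z0 + C x0 y1 z0 + C x0 y0 z1 + C x1 y1 z1"
  proof -
    have eq: "{s\<in>{0..<n}. (x0 \<le> X s \<and> y0 \<le> Y s \<and> z0 \<le> Z s) \<and> x1 \<le> X s \<and> y1 \<le> Y s} = {s\<in>{0..<n}. x1 \<le> X s \<and> y1 \<le> Y s \<and> z0 \<le> Z s}"
      "{s\<in>{0..<n}. (x0 \<le> X s \<and> y0 \<le> Y s \<and> z0 \<le> Z s) \<and> x1 \<le> X s \<and> z1 \<le> Z s} = {s\<in>{0..<n}. x1 \<le> X s \<and> y0 \<le> Y s \<and> z1 \<le> Z s}"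
      "{s\<in>{0..<n}. (x0 \<le> X s \<and> y0 \<le> Y s \<and> z0 \<le> Z s) \<and> y1 \<le> Y s \<and> z1 \<le> Z s} = {s\<in>{0..<n}. x0 \<le> X s \<and> y1 \<le> Y s \<and> z1 \<le> Z s}"
      "{s\<in>{0..<n}. (x0 \<le> X s \<and> y0 \<le> Y s \<and> z0 \<le> Z s) \<and> x1 \<le> X s} = {s\<in>{0..<n}. x1 \<le> X s \<and> y0 \<le> Y s \<and> z0 \<le> Z s}"
      "{s\<in>{0..<n}. (x0 \<le> X s \<and> y0 \<le> Y s \<and> z0 \<le> Z s) \<and> y1 \<le> Y s} = {s\<in>{0..<n}. x0 \<le> X s \<and> y1 \<le> Y s \<and> z0 \<le> Z s}"
      "{s\<in>{0..<n}. (x0 \<le> X s \<and> y0 \<le> Y s \<and> z0 \<le> Z s) \<and> z1 \<le> Z s} = {s\<in>{0..<n}. x0 \<le> X s \<and> y0 \<le> Y s \<and> z1 \<le> Z s}"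
      "{s\<in>{0..<n}. (x0 \<le> X s \<and> y0 \<le> Y s \<and> z0 \<le> Z s) \<and> x1 \<le> X s \<and> y1 \<le> Y s \<and> z1 \<le> Z s} = {s\<in>{0..<n}. x1 \<le> X s \<and> y1 \<le> Y s \<and> z1 \<le> Z s}"
      using assms by auto
    show ?thesis
      using ie3[of "{0..<n}" "\<lambda>s. x0 \<le> X s \<and> y0 \<le> Y s \<and> z0 \<le> Z s" "\<lambda>s. x1 \<le> X s" "\<lambda>s. y1 \<le> Y s" "\<lambda>s. z1 \<le> Z s"]
      unfolding eq C_def by simp
  qed
  show ?thesis using arg_cong[OF k, of real] by simp
qed

end

context tri begin

lemma F0: "F 0 = 1" and G0: "G 0 = 1" and H0: "H 0 = 1" by (auto simp: F_def G_def H_def)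

definition Mx :: "nat \<Rightarrow> nat \<Rightarrow> nat \<Rightarrow> real" where
  "Mx x y z = (1 - (1 - F (x+1)) * (1 - G (y+1)) * (1 - H (z+1)))
     - (F x * G y * H z - (F x - F (x+1)) * (G y - G (y+1)) * (H z - H (z+1)))"

lemma NN_formula:
  assumes "x \<le> a" "y \<le> b" "z \<le> c"
  shows "real (NN n (pw x y z)) = real n * Mx x y z"
proof -
  define U where "U = {s\<in>{0..<n}. (0 \<le> X s \<and> 0 \<le> Y s \<and> 0 \<le> Z s) \<and> (x+1 \<le> X s \<or> y+1 \<le> Y s \<or> z+1 \<le> Z s)}"
  define V where "V = {s\<in>{0..<n}. (x \<le> X s \<and> y \<le> Y s \<and> z \<le> Z s) \<and> (x+1 \<le> X s \<or> y+1 \<le> Y s \<or> z+1 \<le> Z s)}"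
  have set: "{s\<in>{0..<n}. \<not> pw x y z dvd gcd s n \<and> \<not> gcd s n dvd pw x y z} = U - V"
    unfolding U_def V_def using gcd_pw(1) pw_dvd_iff by auto
  have sub: "V \<subseteq> U" unfolding U_def V_def by auto
  have fin: "finite V" unfolding V_def by auto
  have c1: "real (NN n (pw x y z)) = real (card U) - real (card V)"
    unfolding NN_def set using card_Diff_subset[OF fin sub] card_mono[OF _ sub] unfolding U_def by simp
  have cU: "real (card U) = real n * (1 - (1 - F (x+1)) * (1 - G (y+1)) * (1 - H (z+1)))"
    using ie_up[of 0 "x+1" 0 "y+1" 0 "z+1"] unfolding U_def C_real F0 G0 H0
    by (simp add: algebra_simps)
  have cV: "real (card V) = real n * (F x * G y * H z - (F x - F (x+1)) * (G y - G (y+1)) * (H z - H (z+1)))"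
    using ie_up[of x "x+1" y "y+1" z "z+1"] unfolding V_def C_real
    by (simp add: algebra_simps)
  show ?thesis unfolding c1 cU cV Mx_def by (simp add: algebra_simps)
qed

end


lemma N1:
  fixes p q r :: real
  assumes p: "p \<ge> 2" and q: "q \<ge> p + 1" and r: "r \<ge> 2*q + 1"
  shows "1 - (1 - 1/(p*p)) * (1 - 1/q) * (1 - 1/r) \<le> (1 - 1/r) * (1 - (1 - 1/p) * (1 - 1/q))"
proof -
  have h1: "2*(p-1)*(q-1) \<ge> (p*p)"
  proof -
    have "(q-1) \<ge> p" using q by simp
    then have "2*(p-1)*(q-1) \<ge> 2*(p-1)*p" using p by (intro mult_left_mono) auto
    moreover have "2*(p-1)*p \<ge> (p*p)" using p by (simp add: power2_eq_square algebra_simps)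
    ultimately show ?thesis by linarith
  qed
  have h2: "(r-1)*((p-1)*(q-1)) \<ge> (2*q)*((p-1)*(q-1))"
    using p q r by (intro mult_right_mono) auto
  have key: "(r-1)*(p-1)*(q-1) - (p*p)*q \<ge> 0"
  proof -
    have "(2*q)*((p-1)*(q-1)) = q * (2*(p-1)*(q-1))" by (simp add: algebra_simps)
    also have "\<dots> \<ge> q * (p*p)" using h1 q p by (intro mult_left_mono) auto
    finally show ?thesis using h2 by (simp add: algebra_simps)
  qed
  have pos: "p > 0" "q > 0" "r > 0" using p q r by auto
  have eq: "(1 - 1/r) * (1 - (1 - 1/p) * (1 - 1/q)) - (1 - (1 - 1/(p*p)) * (1 - 1/q) * (1 - 1/r))
     = ((r-1)*(p-1)*(q-1) - (p*p)*q) / ((p*p)*q*r)"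
    using pos by (simp add: field_simps)
  have "((r-1)*(p-1)*(q-1) - (p*p)*q) / ((p*p)*q*r) \<ge> 0" using key pos by simp
  then show ?thesis using eq by linarith
qed



lemma N2:
  fixes p q r :: real
  assumes p: "p \<ge> 2" and q: "q \<ge> p + 1" and r: "r \<ge> 2*q + 1"
  shows "1/p + (1 - 1/p)/(q*q) \<le> (1 - 1/r) * (1 - (1 - 1/p) * (1 - 1/q))"
proof -
  have qq: "q*q - 2*q - 1 \<ge> 0"
  proof -
    have "(q-1)*(q-1) \<ge> 2*2" using q p by (intro mult_mono) auto
    then show ?thesis by (simp add: algebra_simps)
  qed
  have s: "(2*q*q - 2*q - 1) \<ge> 0" using qq mult_nonneg_nonneg[of q q] q p by linarith
  have h0: "(p-1)*(2*q*q - 2*q - 1) \<ge> (2*q*q - 2*q - 1)"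
    using s p mult_right_mono[of 1 "p-1" "2*q*q - 2*q - 1"] by simp
  have h1: "(2*q+1)*(p-1)*(q-1) - q*(p+q-1) \<ge> 0"
  proof -
    have "(2*q+1)*(p-1)*(q-1) - q*(p+q-1) = (p-1)*(2*q*q - 2*q - 1) - q*q" by (simp add: algebra_simps)
    moreover note qq
    ultimately show ?thesis using h0 by (simp only:)
  qed
  have h2: "r*((p-1)*(q-1)) \<ge> (2*q+1)*((p-1)*(q-1))"
    using p q r by (intro mult_right_mono) auto
  have key: "r*(p-1)*(q-1) - q*(p+q-1) \<ge> 0" using h1 h2 by (simp add: algebra_simps)
  have pos: "p > 0" "q > 0" "r > 0" using p q r by auto
  have eq: "(1 - 1/r) * (1 - (1 - 1/p) * (1 - 1/q)) - (1/p + (1 - 1/p)/(q*q))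
     = (r*(p-1)*(q-1) - q*(p+q-1)) / (p*q*q*r)"
    using pos by (simp add: field_simps)
  have "(r*(p-1)*(q-1) - q*(p+q-1)) / (p*q*q*r) \<ge> 0" using key pos by simp
  then show ?thesis using eq by linarith
qed

lemma N3:
  fixes p q r :: real
  assumes p: "p \<ge> 2" and q: "q \<ge> p + 1" and r: "r \<ge> 2*q + 1"
  shows "1/p + (1 - 1/p)/r \<le> (1 - 1/r) * (1 - (1 - 1/p) * (1 - 1/q))"
proof -
  have h2: "(r-1)*(p-1) \<ge> (2*q)*(p-1)"
    using p q r by (intro mult_right_mono) auto
  have h3: "(2*q)*(p-1) - p*q = q*(p-2)" by (simp add: algebra_simps)
  have h4: "q*(p-2) \<ge> 0" using p q by simp
  have key: "(r-1)*(p-1) - p*q \<ge> 0" using h2 h3 h4 by linarith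
  have pos: "p > 0" "q > 0" "r > 0" using p q r by auto
  have eq: "(1 - 1/r) * (1 - (1 - 1/p) * (1 - 1/q)) - (1/p + (1 - 1/p)/r)
     = ((r-1)*(p-1) - p*q) / (p*q*r)"
    using pos by (simp add: field_simps)
  have "((r-1)*(p-1) - p*q) / (p*q*r) \<ge> 0" using key pos by simp
  then show ?thesis using eq by linarith
qed



lemma div_le_self':
  fixes x p :: real
  assumes "0 \<le> x" "1 \<le> p" shows "x/p \<le> x"
proof -
  have "x*1 \<le> x*p" using assms by (intro mult_left_mono) auto
  then show ?thesis using assms by (simp add: divide_le_eq)
qed

lemma core:
  fixes p q r \<alpha> \<beta> \<gamma> u v w R :: real
  assumes p: "p \<ge> 2" and q: "q \<ge> p + 1" and r: "r \<ge> 2*q + 1"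
    and al: "0 < \<alpha>" "\<alpha> \<le> 1" "0 \<le> u" "u \<le> \<alpha>/p"
    and be: "0 < \<beta>" "\<beta> \<le> 1" "0 \<le> v" "v \<le> \<beta>/q"
    and ga: "0 < \<gamma>" "\<gamma> \<le> 1" "0 \<le> w" "w \<le> \<gamma>/r"
    and R: "0 < R" "R \<le> 1/r" "R \<le> \<gamma>"
    and ax: "(\<alpha> = 1 \<and> u = 1/p) \<or> \<alpha> \<le> 1/p"
    and bx: "(\<beta> = 1 \<and> v = 1/q) \<or> \<beta> \<le> 1/q"
  shows "1 - (1-u)*(1-v)*(1-w) - (\<alpha>*\<beta>*\<gamma> - (\<alpha>-u)*(\<beta>-v)*(\<gamma>-w))
         \<le> (1 - (1-1/p)*(1-1/q)) * (1-R)"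
proof -
  define A where "A = 1 - (1-1/p)*(1-1/q)"
  have pos: "p > 0" "q > 0" "r > 0" using p q r by auto
  have ip: "1/p \<le> 1" "0 \<le> 1/p" using p by auto
  have iq: "1/q \<le> 1" "0 \<le> 1/q" using p q by auto
  have ir: "1/r \<le> 1" "0 \<le> 1/r" using p q r by auto
  have A0: "A \<ge> 0" unfolding A_def using ip iq mult_le_one[of "1-1/p" "1-1/q"] by simp
  have rR: "(1-1/r)*A \<le> (1-R)*A" using R A0 by (intro mult_right_mono) auto
  consider (c1) "\<alpha> = 1 \<and> u = 1/p \<and> \<beta> = 1 \<and> v = 1/q" | (c2) "\<alpha> \<le> 1/p"
    | (c3) "\<alpha> = 1 \<and> u = 1/p \<and> \<beta> \<le> 1/q" using ax bx by blast
  then show ?thesis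
  proof cases
    case c1
    then have h: "\<alpha> = 1" "u = 1/p" "\<beta> = 1" "v = 1/q" by auto
    have "1 - (1-u)*(1-v)*(1-w) - (\<alpha>*\<beta>*\<gamma> - (\<alpha>-u)*(\<beta>-v)*(\<gamma>-w)) = A*(1-\<gamma>)"
      using pos unfolding h A_def by (simp add: field_simps)
    also have "\<dots> \<le> A*(1-R)" using A0 R by (intro mult_left_mono) auto
    finally show ?thesis unfolding A_def by simp
  next
    case c2
    have u1: "u \<le> \<alpha>" using al div_le_self'[of \<alpha> p] p by simp
    have v1: "v \<le> \<beta>" using be div_le_self'[of \<beta> q] p q by simp
    have w1: "w \<le> \<gamma>" using ga div_le_self'[of \<gamma> r] p q r by simp
    have V0: "(\<alpha>-u)*(\<beta>-v)*(\<gamma>-w) \<le> \<alpha>*\<beta>*\<gamma>"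
      using u1 v1 w1 al be ga by (intro mult_mono) auto
    have u2: "u \<le> 1/(p*p)"
    proof -
      have "\<alpha>/p \<le> (1/p)/p" using c2 pos by (intro divide_right_mono) auto
      then show ?thesis using al by simp
    qed
    have v2: "v \<le> 1/q" using be pos divide_right_mono[of \<beta> 1 q] by simp
    have w2: "w \<le> 1/r" using ga pos divide_right_mono[of \<gamma> 1 r] by simp
    have pp1: "1/(p*p) \<le> 1" using p mult_mono[of 1 p 1 p] by simp
    have prod: "(1-1/(p*p))*(1-1/q)*(1-1/r) \<le> (1-u)*(1-v)*(1-w)"
      using u2 v2 w2 pp1 iq ir by (intro mult_mono) auto
    have "1 - (1-u)*(1-v)*(1-w) - (\<alpha>*\<beta>*\<gamma> - (\<alpha>-u)*(\<beta>-v)*(\<gamma>-w))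
        \<le> 1 - (1-1/(p*p))*(1-1/q)*(1-1/r)" using V0 prod by linarith
    also have "\<dots> \<le> (1-1/r)*A" unfolding A_def using N1[OF p q r] by simp
    finally show ?thesis using rR unfolding A_def by (simp add: mult.commute)
  next
    case c3
    define k where "k = 1 - 1/p"
    have h: "\<alpha> = 1" "u = 1/p" using c3 by auto
    have k0: "0 \<le> k" "k \<le> 1" unfolding k_def using ip by auto
    have id: "1 - (1-u)*(1-v)*(1-w) - (\<alpha>*\<beta>*\<gamma> - (\<alpha>-u)*(\<beta>-v)*(\<gamma>-w))
       = (1-\<beta>*\<gamma>)/p + k*(v*(1-\<gamma>) + w*(1-\<beta>))"
      using pos unfolding k_def h by (simp add: field_simps)
    have b1: "v*(1-\<gamma>) \<le> (\<beta>/q)*(1-\<gamma>)" using be ga by (intro mult_right_mono) auto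
    have b2: "w*(1-\<beta>) \<le> (\<gamma>/r)*(1-\<beta>)" using be ga by (intro mult_right_mono) auto
    have E: "(1-\<beta>*\<gamma>)/p + k*(v*(1-\<gamma>) + w*(1-\<beta>))
        \<le> (1-\<beta>*\<gamma>)/p + k*((\<beta>/q)*(1-\<gamma>) + (\<gamma>/r)*(1-\<beta>))"
      using b1 b2 k0 by (intro add_left_mono mult_left_mono) auto
    define cc where "cc = k/r - \<beta>/p - k*\<beta>/q - k*\<beta>/r"
    have E2: "(1-\<beta>*\<gamma>)/p + k*((\<beta>/q)*(1-\<gamma>) + (\<gamma>/r)*(1-\<beta>)) = 1/p + k*\<beta>/q + \<gamma>*cc"
      using pos unfolding cc_def by (simp add: field_simps)
    have E3: "1/p + k*\<beta>/q + \<gamma>*cc \<le> max (1/p + k/(q*q)) (1/p + k/r)"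
    proof (cases "cc \<le> 0")
      case True
      have "\<gamma>*cc \<le> 0" using True ga by (simp add: mult_nonneg_nonpos)
      moreover have "k*\<beta>/q \<le> k/(q*q)"
      proof -
        have "k*\<beta> \<le> k*(1/q)" using c3 k0 by (intro mult_left_mono) auto
        then have "k*\<beta>/q \<le> k*(1/q)/q" using pos by (intro divide_right_mono) auto
        then show ?thesis by simp
      qed
      ultimately show ?thesis by linarith
    next
      case False
      have "\<gamma>*cc \<le> 1*cc" using False ga by (intro mult_right_mono) auto
      moreover have "k*\<beta>/q + cc \<le> k/r"
      proof -
        have "\<beta>/p \<ge> 0" "k*\<beta>/r \<ge> 0" using be k0 pos by auto
        then show ?thesis unfolding cc_def by simp
      qed
      ultimately show ?thesis by linarith
    qed
    have E4: "max (1/p + k/(q*q)) (1/p + k/r) \<le> (1-1/r)*A"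
      using N2[OF p q r] N3[OF p q r] unfolding k_def A_def by (intro max.boundedI) auto
    have "1 - (1-u)*(1-v)*(1-w) - (\<alpha>*\<beta>*\<gamma> - (\<alpha>-u)*(\<beta>-v)*(\<gamma>-w)) \<le> (1-R)*A"
      using id E E2 E3 E4 rR by linarith
    then show ?thesis unfolding A_def by (simp add: mult.commute)
  qed
qed

lemma ff:
  fixes P :: real and A x :: nat
  assumes P: "P \<ge> 2" and x: "x \<le> A" and A: "0 < A"
  defines "f \<equiv> \<lambda>u. if u \<le> A then 1 / P ^ u else 0"
  shows "0 < f x" "f x \<le> 1" "0 \<le> f (x+1)" "f (x+1) \<le> f x / P"
    "(f x = 1 \<and> f (x+1) = 1/P) \<or> f x \<le> 1/P"
proof -
  have P1: "P \<ge> 1" using P by simp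
  show "0 < f x" using x P unfolding f_def by simp
  show "f x \<le> 1" using x P1 unfolding f_def by simp
  show "0 \<le> f (x+1)" using P unfolding f_def by simp
  show "f (x+1) \<le> f x / P" using x P unfolding f_def by (auto simp: mult.commute)
  show "(f x = 1 \<and> f (x+1) = 1/P) \<or> f x \<le> 1/P"
  proof (cases "x = 0")
    case True
    then show ?thesis using A unfolding f_def by simp
  next
    case False
    then obtain m where m: "x = Suc m" by (cases x) auto
    have "P ^ m \<ge> 1" using P1 by simp
    then have "1 / (P * P ^ m) \<le> 1 / P" using P
      by (intro divide_left_mono) (auto simp: mult_le_cancel_left1)
    then show ?thesis using x m unfolding f_def by (auto simp: mult.commute)
  qed
qed

context tri begin

lemma Mx_le:
  assumes "x \<le> a" "y \<le> b" "z \<le> c"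
  shows "Mx x y z \<le> Mx 0 0 c"
proof -
  have p2: "real p \<ge> 2" using pp prime_ge_2_nat by (simp add: of_nat_le_iff[symmetric])
  have q2: "real q \<ge> real p + 1" using lpq by simp
  have r2: "real r \<ge> 2 * real q + 1" using big by (simp add: of_nat_le_iff[symmetric])
  have r1: "real r \<ge> 1" using r2 q2 p2 by simp
  have q2': "real q \<ge> 2" using p2 q2 by simp
  have r2': "real r \<ge> 2" using r2 q2' by simp
  have fF: "0 < F x" "F x \<le> 1" "0 \<le> F (x+1)" "F (x+1) \<le> F x / real p"
    "(F x = 1 \<and> F (x+1) = 1/real p) \<or> F x \<le> 1/real p"
    unfolding F_def by (rule ff[OF p2 assms(1) a0])+
  have fG: "0 < G y" "G y \<le> 1" "0 \<le> G (y+1)" "G (y+1) \<le> G y / real q"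
    "(G y = 1 \<and> G (y+1) = 1/real q) \<or> G y \<le> 1/real q"
    unfolding G_def by (rule ff[OF q2' assms(2) b0])+
  have fH: "0 < H z" "H z \<le> 1" "0 \<le> H (z+1)" "H (z+1) \<le> H z / real r"
    unfolding H_def by (rule ff[OF r2' assms(3) c0])+
  define R where "R = 1 / real r ^ c"
  have R0: "0 < R" unfolding R_def using r1 by simp
  have R1: "R \<le> 1 / real r"
  proof -
    obtain m where m: "c = Suc m" using c0 by (cases c) auto
    have "real r ^ m \<ge> 1" using r1 by simp
    then have "1 / (real r * real r ^ m) \<le> 1 / real r" using r1
      by (intro divide_left_mono) (auto simp: mult_le_cancel_left1)
    then show ?thesis unfolding R_def m by simp
  qed
  have R2: "R \<le> H z"
  proof -
    have "real r ^ z \<le> real r ^ c" by (rule power_increasing[OF assms(3) r1])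
    then have "1 / real r ^ c \<le> 1 / real r ^ z" using r1
      by (intro divide_left_mono) auto
    then show ?thesis unfolding R_def H_def using assms(3) by simp
  qed
  note core_inst = core[OF p2 q2 r2 fF(1,2,3,4) fG(1,2,3,4) fH(1,2,3,4) R0 R1 R2 fF(5) fG(5)]
  have M0: "Mx 0 0 c = (1 - (1-1/real p)*(1-1/real q)) * (1-R)"
    unfolding Mx_def F_def G_def H_def R_def using a0 b0 c0
    by (simp add: algebra_simps)
  have "Mx x y z \<le> (1 - (1-1/real p)*(1-1/real q)) * (1-R)" using core_inst unfolding Mx_def by simp
  then show ?thesis using M0 by simp
qed

lemma NN_le:
  assumes "s < n"
  shows "NN n (gcd s n) \<le> NN n (r ^ c)"
proof -
  have rc: "r ^ c = pw 0 0 c" unfolding pw_def by simp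
  have "real (NN n (gcd s n)) = real n * Mx (X s) (Y s) (Z s)"
    unfolding gcd_pw(1) by (rule NN_formula) (use gcd_pw in auto)
  also have "\<dots> \<le> real n * Mx 0 0 c"
    using Mx_le[of "X s" "Y s" "Z s"] gcd_pw by (intro mult_left_mono) auto
  also have "\<dots> = real (NN n (r ^ c))" unfolding rc by (rule NN_formula[symmetric]) auto
  finally show ?thesis by simp
qed

lemma main: "pg_min_deg n = pg_deg n (r ^ c)"
proof -
  have rcn: "r ^ c < n"
  proof -
    have "p ^ a * q ^ b \<ge> 2"
    proof -
      have "p ^ a \<ge> p" using a0 prime_gt_0_nat[OF pp] self_le_power[of p a] by simp
      moreover have "q ^ b \<ge> 1" using prime_gt_0_nat[OF pq] by simp
      ultimately have "p ^ a * q ^ b \<ge> p * 1" by (intro mult_mono) auto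
      then show ?thesis using prime_ge_2_nat[OF pp] by simp
    qed
    moreover have "r ^ c > 0" using pr prime_gt_0_nat by simp
    ultimately show ?thesis unfolding ndef by (simp add: mult.commute)
  qed
  have grc: "gcd (r ^ c) n = r ^ c" unfolding ndef by simp
  have d1: "pg_deg n (r ^ c) + 1 + NN n (r ^ c) = n" using deg_NN[OF n_pos rcn] grc by simp
  show ?thesis unfolding pg_min_deg_def
  proof (rule Min_eqI)
    show "finite (pg_deg n ` {0..<n})" by simp
    show "pg_deg n (r ^ c) \<in> pg_deg n ` {0..<n}" using rcn by simp
    fix y assume "y \<in> pg_deg n ` {0..<n}"
    then obtain s where s: "s < n" "y = pg_deg n s" by auto
    have "pg_deg n s + 1 + NN n (gcd s n) = n" using deg_NN[OF n_pos s(1)] .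
    then show "pg_deg n (r ^ c) \<le> y" using d1 NN_le[OF s(1)] s(2) by linarith
  qed
qed

end

theorem corollary5p3:
  fixes n p1 p2 p3 a1 a2 a3 :: nat
  assumes "prime p1" "prime p2" "prime p3"
    and "p1 < p2" "p2 < p3"
    and "a1 > 0" "a2 > 0" "a3 > 0"
    and "n = p1 ^ a1 * p2 ^ a2 * p3 ^ a3"
    and "p3 \<ge> 2 * p2 + 1"
  shows "pg_min_deg n = pg_deg n (p3 ^ a3)"
proof -
  interpret tri p1 p2 p3 a1 a2 a3 n
    using assms by unfold_locales auto
  show ?thesis by (rule main)
qed

end
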